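(* Let $H$ be an ideal geometric-value hash function with parameter $\frac{\gamma}{1+\gamma}$, and let the hash key $\zeta_i$ be drawn uniformly and be unknown to the adversary. In the procedure $\textsf{DPFMPS-Gen}$ (described in the context), for each fixed $i\in[M]$, the output row $\boldsymbol{A}_i=(\boldsymbol{A}_{i,1},\ldots,\boldsymbol{A}_{i,k'})$ (one set of partition sketches), viewed as a randomized function of the local dataset, is $\epsilon'$-differentially private, where $\epsilon'=\frac{\epsilon_2}{4\sqrt{M\log(1/\delta_2)}}$.
   Context: Differential privacy: a randomized algorithm $\mathcal{A}$ is $\epsilon$-DP if for all pairs of datasets $\mathbf{X},\mathbf{X}'$ differing in one user record (one user added or removed) and all sets $O$ of outputs, $\Pr[\mathcal{A}(\mathbf{X})\in O]\le e^{\epsilon}\Pr[\mathcal{A}(\mathbf{X}')\in O]$. A random variable $Y\sim\mathrm{Geometric}(p)$ takes values in $\{1,2,\ldots\}$ with $\Pr[Y\le z]=1-(1-p)^z$. An ideal geometric-value hash function $H:\mathcal{X}\times\mathbb{Z}\to\mathbb{N}_+$ with parameter $\frac{\gamma}{1+\gamma}$ ($\gamma>0$) is one such that, for a uniformly drawn key $\zeta$, for any finite set of distinct inputs $x_1,\ldots,x_t$ the values $H_\zeta(x_1),\ldots,H_\zeta(x_t)$ are i.i.d. $\mathrm{Geometric}(\frac{\gamma}{1+\gamma})$. Procedure $\mathtt{DPFM}(\mathcal{M},\epsilon',\gamma,\zeta)$ on a set $\mathcal{M}$ of user ids: set $n_p=\lceil 1/(e^{\epsilon'}-1)\rceil$ and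 $\alpha_{\min}=\lceil\log_{1+\gamma}\frac{1}{1-e^{-\epsilon'}}\rceil$; let $\alpha_p=\max\{Y_1,\ldots,Y_{n_p}\}$ with $Y_j$ fresh i.i.d. $\mathrm{Geometric}(\frac{\gamma}{1+\gamma})$; let $\alpha_{real}=\max\{H_\zeta(\mathtt{id}):\mathtt{id}\in\mathcal{M}\}$; return $\max\{\alpha_p,\alpha_{real},\alpha_{\min}\}$. Procedure $\textsf{DPFMPS-Gen}$ with inputs: local dataset $\mathbf{X}^{(\ell)}$ of records $x^{(\ell)}_{\mathtt{id}}$ indexed by user ids, a given set of centers $\{c^{(\ell)}_1,\ldots,c^{(\ell)}_{k'}\}$ (not depending on the protected data), parameters $\epsilon_2,\delta_2,\gamma,M$ and keys $\zeta_1,\ldots,\zeta_M$. It sets $\epsilon'=\frac{\epsilon_2}{4\sqrt{M\log(1/\delta_2)}}$, partitions user ids into $\mathcal{M}^{(\ell)}_1,\ldots,\mathcal{M}^{(\ell)}_{k'}$ with $\mathtt{id}\in\mathcal{M}^{(\ell)}_a$ iff $a=\arg\min_j\|x^{(\ell)}_{\mathtt{id}}-c^{(\ell)}_j\|_2^2$, and sets $\boldsymbol{A}_{i,a}=\mathtt{DPFM}(\mathcal{M}^{(\ell)}_a,\epsilon',\gamma,\zeta_i)$ for $i\in[M]$, $a\in[k']$. *)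

theory Defs
  imports "HOL-Probability.Probability"
begin

definition geom_pos :: "real \<Rightarrow> nat pmf" where
  "geom_pos \<gamma> = map_pmf Suc (geometric_pmf (\<gamma> / (1 + \<gamma>)))"

definition ideal_geo_hash :: "'k measure \<Rightarrow> ('k \<Rightarrow> 'id \<Rightarrow> nat) \<Rightarrow> real \<Rightarrow> bool" where
  "ideal_geo_hash K H \<gamma> \<longleftrightarrow>
     prob_space K \<and>
     (\<forall>x n. {\<zeta> \<in> space K. H \<zeta> x = n} \<in> sets K) \<and>
     (\<forall>S f. finite S \<longrightarrow>
        measure K {\<zeta> \<in> space K. \<forall>x\<in>S. H \<zeta> x = f x} = (\<Prod>x\<in>S. pmf (geom_pos \<gamma>) (f x)))"

definition n_p :: "real \<Rightarrow> nat" where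
  "n_p \<epsilon>' = nat \<lceil>1 / (exp \<epsilon>' - 1)\<rceil>"

definition alpha_min :: "real \<Rightarrow> real \<Rightarrow> nat" where
  "alpha_min \<gamma> \<epsilon>' = nat \<lceil>log (1 + \<gamma>) (1 / (1 - exp (- \<epsilon>')))\<rceil>"

definition alpha_p_pmf :: "real \<Rightarrow> real \<Rightarrow> nat pmf" where
  "alpha_p_pmf \<epsilon>' \<gamma> =
     map_pmf (\<lambda>Y. Max (Y ` {..<n_p \<epsilon>'})) (Pi_pmf {..<n_p \<epsilon>'} 0 (\<lambda>_. geom_pos \<gamma>))"

text \<open>DPFM on id set Ms, given key zeta and the already drawn alpha_p
  (alpha_real over an empty set is taken as 0, which is dominated by alpha_min \<ge> 1).\<close>
definition DPFM :: "('k \<Rightarrow> 'id \<Rightarrow> nat) \<Rightarrow> 'id set \<Rightarrow> real \<Rightarrow> real \<Rightarrow> 'k \<Rightarrow> nat \<Rightarrow> nat" where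
  "DPFM H Ms \<epsilon>' \<gamma> \<zeta> \<alpha>p = max (max \<alpha>p (Max (insert 0 (H \<zeta> ` Ms)))) (alpha_min \<gamma> \<epsilon>')"

definition nearest :: "(nat \<Rightarrow> 'a::euclidean_space) \<Rightarrow> nat \<Rightarrow> 'a \<Rightarrow> nat" where
  "nearest c k' x = (LEAST a. a < k' \<and> (\<forall>j<k'. (norm (x - c a))\<^sup>2 \<le> (norm (x - c j))\<^sup>2))"

definition part_set :: "('id \<rightharpoonup> 'a::euclidean_space) \<Rightarrow> (nat \<Rightarrow> 'a) \<Rightarrow> nat \<Rightarrow> nat \<Rightarrow> 'id set" where
  "part_set X c k' a = {i \<in> dom X. nearest c k' (the (X i)) = a}"

definition DPFMPS_row :: "'k measure \<Rightarrow> ('k \<Rightarrow> 'id \<Rightarrow> nat) \<Rightarrow> real \<Rightarrow> real \<Rightarrow>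
    (nat \<Rightarrow> 'a::euclidean_space) \<Rightarrow> nat \<Rightarrow> ('id \<rightharpoonup> 'a) \<Rightarrow> nat list measure" where
  "DPFMPS_row K H \<gamma> \<epsilon>' c k' X =
     distr (K \<Otimes>\<^sub>M measure_pmf (Pi_pmf {..<k'} 0 (\<lambda>_. alpha_p_pmf \<epsilon>' \<gamma>))) (count_space UNIV)
       (\<lambda>(\<zeta>, A). map (\<lambda>a. DPFM H (part_set X c k' a) \<epsilon>' \<gamma> \<zeta> (A a)) [0..<k'])"

definition eps_prime :: "real \<Rightarrow> real \<Rightarrow> nat \<Rightarrow> real" where
  "eps_prime \<epsilon>2 \<delta>2 M = \<epsilon>2 / (4 * sqrt (real M * ln (1 / \<delta>2)))"

definition neighbours :: "('id \<rightharpoonup> 'r) \<Rightarrow> ('id \<rightharpoonup> 'r) \<Rightarrow> bool" where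
  "neighbours X X' \<longleftrightarrow> (\<exists>i r. (i \<notin> dom X \<and> X' = X(i \<mapsto> r)) \<or> (i \<notin> dom X' \<and> X = X'(i \<mapsto> r)))"

definition eps_DP :: "(('id \<rightharpoonup> 'r) \<Rightarrow> 'o measure) \<Rightarrow> real \<Rightarrow> bool" where
  "eps_DP A \<epsilon> \<longleftrightarrow> (\<forall>X X' S. finite (dom X) \<and> finite (dom X') \<and> neighbours X X' \<longrightarrow>
       measure (A X) S \<le> exp \<epsilon> * measure (A X') S)"

end

theory Submission
  imports Defs
begin

lemma geo_sum: "(\<Sum>k<v. (q::real)^k * (1 - q)) = 1 - q^v"
  by (induction v) (auto simp: algebra_simps)

lemma geo_cdf:
  assumes "\<gamma> > 0"
  shows "measure_pmf.prob (geom_pos \<gamma>) {..v} = 1 - (1/(1+\<gamma>))^v"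
proof -
  have p: "0 < \<gamma>/(1+\<gamma>)" "\<gamma>/(1+\<gamma>) \<le> 1" using assms by auto
  have e: "1 - \<gamma>/(1+\<gamma>) = 1/(1+\<gamma>)" using assms by (simp add: field_simps)
  have "Suc -` {..v} = {..<v}" by auto
  then have "measure_pmf.prob (geom_pos \<gamma>) {..v} = measure_pmf.prob (geometric_pmf (\<gamma>/(1+\<gamma>))) {..<v}"
    by (simp add: geom_pos_def)
  also have "\<dots> = (\<Sum>k<v. (1/(1+\<gamma>))^k * (1 - 1/(1+\<gamma>)))"
    by (subst measure_measure_pmf_finite) (auto simp: pmf_geometric[OF p] e[symmetric])
  also have "\<dots> = 1 - (1/(1+\<gamma>))^v" by (rule geo_sum)
  finally show ?thesis .
qed

lemma ap_cdf:
  assumes "\<gamma> > 0" "n_p e \<ge> 1"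
  shows "measure_pmf.prob (alpha_p_pmf e \<gamma>) {..v} = (1 - (1/(1+\<gamma>))^v) ^ n_p e"
proof -
  let ?n = "n_p e"
  have "(\<lambda>Y. Max (Y ` {..<?n})) -` {..v} = Pi {..<?n} (\<lambda>_. {..v})"
  proof -
    have "\<And>Y. Max (Y ` {..<?n}) \<le> v \<longleftrightarrow> (\<forall>j<?n. Y j \<le> v)"
    proof -
      have "0 \<in> {..<?n}" using assms(2) by simp
      then have "{..<?n} \<noteq> {}" by blast
      then show "\<And>Y. Max (Y ` {..<?n}) \<le> v \<longleftrightarrow> (\<forall>j<?n. Y j \<le> v)" by (subst Max_le_iff) auto
    qed
    then show ?thesis by (auto simp: Pi_def)
  qed
  then have "measure_pmf.prob (alpha_p_pmf e \<gamma>) {..v} =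
     measure_pmf.prob (Pi_pmf {..<?n} 0 (\<lambda>_. geom_pos \<gamma>)) (Pi {..<?n} (\<lambda>_. {..v}))"
    by (simp add: alpha_p_pmf_def)
  also have "\<dots> = (\<Prod>x\<in>{..<?n}. measure_pmf.prob (geom_pos \<gamma>) {..v})"
    by (rule measure_Pi_pmf_Pi) simp
  also have "\<dots> = (1 - (1/(1+\<gamma>))^v) ^ ?n" using geo_cdf[OF assms(1)] by simp
  finally show ?thesis .
qed

lemma ap2_cdf:
  assumes "\<gamma> > 0" "n_p e \<ge> 1"
  shows "measure_pmf.prob (map_pmf (\<lambda>(a,w). max a w) (pair_pmf (alpha_p_pmf e \<gamma>) (geom_pos \<gamma>))) {..v}
     = (1 - (1/(1+\<gamma>))^v) ^ Suc (n_p e)"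
proof -
  have "(\<lambda>(a::nat,w). max a w) -` {..v} = {..v} \<times> {..v}" by auto
  then show ?thesis
    by (simp add: measure_pmf_prob_product ap_cdf[OF assms] geo_cdf[OF assms(1)])
qed

lemma pmf_max_c0:
  fixes p :: "nat pmf"
  assumes "\<And>v. measure_pmf.prob p {..v} = G v"
  shows "pmf (map_pmf (\<lambda>a. max a c0) p) v =
     (if v < c0 then 0 else if v = c0 then G c0 else G v - G (v - 1))"
proof -
  have "pmf (map_pmf (\<lambda>a. max a c0) p) v = measure_pmf.prob p ((\<lambda>a. max a c0) -` {v})"
    by (simp add: pmf_map)
  also have "\<dots> = (if v < c0 then 0 else if v = c0 then G c0 else G v - G (v - 1))"
  proof (cases "v < c0")
    case True
    then have "(\<lambda>a. max a c0) -` {v} = {}" by auto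
    then show ?thesis using True by simp
  next
    case False
    show ?thesis
    proof (cases "v = c0")
      case True
      then have "(\<lambda>a. max a c0) -` {v} = {..v}" by auto
      then show ?thesis using True assms by simp
    next
      case F2: False
      then have s: "(\<lambda>a. max a c0) -` {v} = {v}" using False by auto
      have u: "{..v} = {..v-1} \<union> {v}" using False F2 by auto
      have "measure_pmf.prob p {..v} = measure_pmf.prob p {..v-1} + measure_pmf.prob p {v}"
        unfolding u using False F2 by (subst measure_pmf.finite_measure_Union) auto
      then show ?thesis using s False F2 assms by simp
    qed
  qed
  finally show ?thesis .
qed

lemma pow_diff_ge: "0 \<le> s \<Longrightarrow> s \<le> t \<Longrightarrow> s \<le> 1 \<Longrightarrow> real n * s^n * (t - s) \<le> t^n - (s::real)^n"
proof (induction n)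
  case 0 then show ?case by simp
next
  case (Suc n)
  have IH: "real n * s^n * (t - s) \<le> t^n - s^n" using Suc by simp
  have e: "t^Suc n - s^Suc n = t*(t^n - s^n) + s^n*(t-s)" by (simp add: algebra_simps)
  have d: "t^n - s^n \<ge> 0" using Suc.prems by (simp add: power_mono)
  have f1: "t*(t^n - s^n) \<ge> s*(t^n - s^n)"
    using Suc.prems d by (intro mult_right_mono) auto
  have f2: "s*(t^n - s^n) \<ge> s*(real n * s^n * (t - s))" using IH Suc.prems by (intro mult_left_mono) auto
  have "t^Suc n - s^Suc n \<ge> real n * s^Suc n * (t - s) + s^n*(t-s)"
    using e f1 f2 by (simp add: algebra_simps)
  moreover have "s^n*(t-s) \<ge> s^Suc n * (t-s)"
    using Suc.prems by (intro mult_right_mono) (auto simp: power_le_one mult_left_le_one_le)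
  ultimately show ?case by (simp add: algebra_simps)
qed

lemma num_up:
  fixes s t E :: real
  assumes "0 \<le> s" "s \<le> t" "t \<le> 1" "n \<ge> 1" "1 + 1/real n \<le> E"
  shows "t^Suc n - s^Suc n \<le> E * (t^n - s^n)"
proof -
  have d: "t^n - s^n \<ge> 0" using assms by (simp add: power_mono)
  have a: "real n * s^n * (t - s) \<le> t^n - s^n" using pow_diff_ge assms by auto
  have b: "s^n * (t - s) \<le> (t^n - s^n) / real n" using a assms by (simp add: field_simps)
  have "t^Suc n - s^Suc n = t*(t^n - s^n) + s^n*(t-s)" by (simp add: algebra_simps)
  also have "\<dots> \<le> (t^n - s^n) + (t^n - s^n)/real n"
    using b d assms by (smt (verit) mult_left_le_one_le)
  also have "\<dots> = (1 + 1/real n) * (t^n - s^n)" by (simp add: distrib_right)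
  also have "\<dots> \<le> E * (t^n - s^n)" using d assms by (intro mult_right_mono) auto
  finally show ?thesis .
qed

lemma num_down:
  fixes s t E :: real
  assumes "0 \<le> s" "s \<le> t" "1 \<le> E * t" "E \<ge> 0"
  shows "t^n - s^n \<le> E * (t^Suc n - s^Suc n)"
proof -
  have d: "t^n - s^n \<ge> 0" using assms by (simp add: power_mono)
  have "t^Suc n - s^Suc n = t*(t^n - s^n) + s^n*(t-s)" by (simp add: algebra_simps)
  moreover have "s^n*(t-s) \<ge> 0" using assms by simp
  ultimately have "t^Suc n - s^Suc n \<ge> t*(t^n - s^n)" by simp
  then have "E * (t^Suc n - s^Suc n) \<ge> E*(t*(t^n - s^n))" using assms by (simp add: mult_left_mono)
  moreover have "E*t*(t^n - s^n) \<ge> t^n - s^n" using mult_right_mono[of 1 "E*t" "t^n - s^n"] d assms by simp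
  ultimately show ?thesis by (simp add: mult.assoc)
qed

definition FF :: "real \<Rightarrow> nat \<Rightarrow> real" where "FF \<gamma> v = 1 - (1/(1+\<gamma>))^v"

lemma FF_mono: "\<gamma> > 0 \<Longrightarrow> v \<le> w \<Longrightarrow> FF \<gamma> v \<le> FF \<gamma> w"
  unfolding FF_def by (simp add: power_decreasing)

lemma FF_bounds: "\<gamma> > 0 \<Longrightarrow> 0 \<le> FF \<gamma> v \<and> FF \<gamma> v \<le> 1"
  unfolding FF_def by (auto simp: power_le_one)

lemma FF_amin:
  assumes "\<gamma> > 0" "e > 0"
  shows "FF \<gamma> (alpha_min \<gamma> e) \<ge> exp (-e)"
proof -
  let ?L = "log (1 + \<gamma>) (1 / (1 - exp (- e)))"
  have ee: "exp (-e) < 1" using assms by simp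
  have pos: "1 / (1 - exp (- e)) > 0" using ee by simp
  have "real (alpha_min \<gamma> e) \<ge> ?L" unfolding alpha_min_def by linarith
  then have "(1+\<gamma>) powr real (alpha_min \<gamma> e) \<ge> (1+\<gamma>) powr ?L"
    using assms by (intro powr_mono) auto
  also have "(1+\<gamma>) powr ?L = 1 / (1 - exp (- e))" using assms pos by simp
  finally have "(1+\<gamma>) ^ (alpha_min \<gamma> e) \<ge> 1 / (1 - exp (- e))"
    using assms by (simp add: powr_realpow)
  then have "(1/(1+\<gamma>)) ^ (alpha_min \<gamma> e) \<le> 1 - exp (-e)"
    using assms ee by (simp add: power_one_over field_simps)
  then show ?thesis unfolding FF_def by simp
qed

lemma np_facts:
  assumes "e > 0"
  shows "n_p e \<ge> 1" "1 + 1 / real (n_p e) \<le> exp e"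
proof -
  have ee: "exp e - 1 > 0" using assms by simp
  have "real (n_p e) \<ge> 1 / (exp e - 1)" unfolding n_p_def by linarith
  moreover have "1 / (exp e - 1) > 0" using ee by simp
  ultimately have n: "real (n_p e) > 0" by linarith
  then show "n_p e \<ge> 1" by simp
  have "1 / real (n_p e) \<le> exp e - 1"
    using \<open>real (n_p e) \<ge> 1 / (exp e - 1)\<close> ee n by (simp add: field_simps)
  then show "1 + 1 / real (n_p e) \<le> exp e" by simp
qed

definition ap2 :: "real \<Rightarrow> real \<Rightarrow> nat pmf" where
  "ap2 e \<gamma> = map_pmf (\<lambda>(a,w). max a w) (pair_pmf (alpha_p_pmf e \<gamma>) (geom_pos \<gamma>))"

lemma kern_pt:
  assumes "\<gamma> > 0" "e > 0" "c0 \<ge> alpha_min \<gamma> e"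
  shows "pmf (map_pmf (\<lambda>a. max a c0) (ap2 e \<gamma>)) v \<le> exp e * pmf (map_pmf (\<lambda>a. max a c0) (alpha_p_pmf e \<gamma>)) v"
    and "pmf (map_pmf (\<lambda>a. max a c0) (alpha_p_pmf e \<gamma>)) v \<le> exp e * pmf (map_pmf (\<lambda>a. max a c0) (ap2 e \<gamma>)) v"
proof -
  let ?n = "n_p e"
  note np = np_facts[OF assms(2)]
  have c1: "\<And>v. measure_pmf.prob (alpha_p_pmf e \<gamma>) {..v} = FF \<gamma> v ^ ?n"
    using ap_cdf[OF assms(1) np(1)] by (simp add: FF_def)
  have c2: "\<And>v. measure_pmf.prob (ap2 e \<gamma>) {..v} = FF \<gamma> v ^ Suc ?n"
    using ap2_cdf[OF assms(1) np(1)] by (simp add: FF_def ap2_def)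
  note P1 = pmf_max_c0[OF c1, of c0 v] and P2 = pmf_max_c0[OF c2, of c0 v]
  have tlow: "FF \<gamma> c0 \<ge> exp (-e)" using FF_amin[OF assms(1,2)] FF_mono[OF assms(1) assms(3)] by linarith
  have Et: "1 \<le> exp e * FF \<gamma> c0"
  proof -
    have "exp e * exp (-e) \<le> exp e * FF \<gamma> c0" using tlow by simp
    then show ?thesis by (simp add: exp_minus field_simps)
  qed
  have "pmf (map_pmf (\<lambda>a. max a c0) (ap2 e \<gamma>)) v \<le> exp e * pmf (map_pmf (\<lambda>a. max a c0) (alpha_p_pmf e \<gamma>)) v
      \<and> pmf (map_pmf (\<lambda>a. max a c0) (alpha_p_pmf e \<gamma>)) v \<le> exp e * pmf (map_pmf (\<lambda>a. max a c0) (ap2 e \<gamma>)) v"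
  proof (cases "v < c0")
    case True then show ?thesis using P1 P2 by simp
  next
    case False
    show ?thesis
    proof (cases "v = c0")
      case True
      let ?t = "FF \<gamma> c0"
      have b: "0 \<le> ?t" "?t \<le> 1" using FF_bounds[OF assms(1)] by auto
      have "?t ^ Suc ?n \<le> ?t ^ ?n" using b by (simp add: mult_left_le_one_le)
      also have "\<dots> \<le> exp e * ?t ^ ?n" using b mult_right_mono[of 1 "exp e" "?t ^ ?n"] assms(2) by simp
      finally have u: "?t ^ Suc ?n \<le> exp e * ?t ^ ?n" .
      have "?t ^ ?n \<le> exp e * ?t ^ Suc ?n"
        using num_down[of 0 ?t "exp e" ?n] b Et by (cases ?n) auto
      then show ?thesis using u P1 P2 True by simp
    next
      case F2: False
      let ?t = "FF \<gamma> v" and ?s = "FF \<gamma> (v - 1)"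
      have st: "?s \<le> ?t" using FF_mono[OF assms(1)] by simp
      have s0: "0 \<le> ?s" and t1: "?t \<le> 1" using FF_bounds[OF assms(1)] by auto
      have "FF \<gamma> c0 \<le> ?t" using FF_mono[OF assms(1)] False by simp
      then have Et': "1 \<le> exp e * ?t" using Et by (smt (verit) exp_gt_zero mult_left_mono)
      have u: "?t ^ Suc ?n - ?s ^ Suc ?n \<le> exp e * (?t ^ ?n - ?s ^ ?n)"
        using num_up[OF s0 st t1 np] .
      have d: "?t ^ ?n - ?s ^ ?n \<le> exp e * (?t ^ Suc ?n - ?s ^ Suc ?n)"
        using num_down[OF s0 st Et'] by simp
      show ?thesis using u d P1 P2 False F2 by simp
    qed
  qed
  then show "pmf (map_pmf (\<lambda>a. max a c0) (ap2 e \<gamma>)) v \<le> exp e * pmf (map_pmf (\<lambda>a. max a c0) (alpha_p_pmf e \<gamma>)) v"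
    and "pmf (map_pmf (\<lambda>a. max a c0) (alpha_p_pmf e \<gamma>)) v \<le> exp e * pmf (map_pmf (\<lambda>a. max a c0) (ap2 e \<gamma>)) v"
    by auto
qed

lemma pt_to_set:
  assumes "\<And>v. pmf p v \<le> c * pmf q v" "c \<ge> 0"
  shows "emeasure (measure_pmf p) T \<le> ennreal c * emeasure (measure_pmf q) T"
proof -
  have "emeasure (measure_pmf p) T = (\<integral>\<^sup>+x. ennreal (pmf p x) * indicator T x \<partial>count_space UNIV)"
    by (subst nn_integral_indicator[symmetric]) (auto simp: nn_integral_measure_pmf)
  also have "\<dots> \<le> (\<integral>\<^sup>+x. ennreal c * (ennreal (pmf q x) * indicator T x) \<partial>count_space UNIV)"
    using assms by (intro nn_integral_mono) (auto simp: indicator_def ennreal_mult[symmetric] intro!: ennreal_leI)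
  also have "\<dots> = ennreal c * (\<integral>\<^sup>+x. ennreal (pmf q x) * indicator T x \<partial>count_space UNIV)"
    by (rule nn_integral_cmult) auto
  also have "(\<integral>\<^sup>+x. ennreal (pmf q x) * indicator T x \<partial>count_space UNIV) = emeasure (measure_pmf q) T"
    by (subst nn_integral_indicator[symmetric]) (auto simp: nn_integral_measure_pmf)
  finally show ?thesis .
qed

definition upd :: "nat \<Rightarrow> nat list \<Rightarrow> nat \<Rightarrow> nat list" where
  "upd a0 L a = L[a0 := max a (L ! a0)]"

lemma kern_list:
  assumes "\<gamma> > 0" "e > 0" "L ! a0 \<ge> alpha_min \<gamma> e"
  shows "emeasure (measure_pmf (map_pmf (upd a0 L) (ap2 e \<gamma>))) S \<le> ennreal (exp e) * emeasure (measure_pmf (map_pmf (upd a0 L) (alpha_p_pmf e \<gamma>))) S"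
    and "emeasure (measure_pmf (map_pmf (upd a0 L) (alpha_p_pmf e \<gamma>))) S \<le> ennreal (exp e) * emeasure (measure_pmf (map_pmf (upd a0 L) (ap2 e \<gamma>))) S"
proof -
  have m: "\<And>p. map_pmf (upd a0 L) p = map_pmf (\<lambda>v. L[a0 := v]) (map_pmf (\<lambda>a. max a (L ! a0)) p)"
    by (simp add: map_pmf_comp upd_def[abs_def])
  show "emeasure (measure_pmf (map_pmf (upd a0 L) (ap2 e \<gamma>))) S \<le> ennreal (exp e) * emeasure (measure_pmf (map_pmf (upd a0 L) (alpha_p_pmf e \<gamma>))) S"
    unfolding m emeasure_map_pmf[of "\<lambda>v. L[a0 := v]"]
    by (rule pt_to_set) (use kern_pt[OF assms] in auto)
  show "emeasure (measure_pmf (map_pmf (upd a0 L) (alpha_p_pmf e \<gamma>))) S \<le> ennreal (exp e) * emeasure (measure_pmf (map_pmf (upd a0 L) (ap2 e \<gamma>))) S"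
    unfolding m emeasure_map_pmf[of "\<lambda>v. L[a0 := v]"]
    by (rule pt_to_set) (use kern_pt[OF assms] in auto)
qed

lemma mixture:
  assumes "\<And>z. emeasure (measure_pmf (K1 z)) S \<le> ennreal c * emeasure (measure_pmf (K2 z)) S"
  shows "emeasure (measure_pmf (bind_pmf Z K1)) S \<le> ennreal c * emeasure (measure_pmf (bind_pmf Z K2)) S"
proof -
  have "emeasure (measure_pmf (bind_pmf Z K1)) S = (\<integral>\<^sup>+z. emeasure (K1 z) S \<partial>Z)" by simp
  also have "\<dots> \<le> (\<integral>\<^sup>+z. ennreal c * emeasure (K2 z) S \<partial>Z)" using assms by (intro nn_integral_mono) auto
  also have "\<dots> = ennreal c * (\<integral>\<^sup>+z. emeasure (K2 z) S \<partial>Z)" by (rule nn_integral_cmult) auto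
  finally show ?thesis by simp
qed

definition Psi :: "('id \<Rightarrow> nat) \<Rightarrow> ('id \<rightharpoonup> 'a::euclidean_space) \<Rightarrow> (nat \<Rightarrow> 'a) \<Rightarrow> nat \<Rightarrow> real \<Rightarrow> real \<Rightarrow> (nat \<Rightarrow> nat) \<Rightarrow> nat list" where
  "Psi h X c k' e \<gamma> A = map (\<lambda>a. DPFM (\<lambda>_::unit. h) (part_set X c k' a) e \<gamma> () (A a)) [0..<k']"

definition look :: "'id list \<Rightarrow> nat list \<Rightarrow> 'id \<Rightarrow> nat" where
  "look xs ys x = the (map_of (zip xs ys) x)"

lemma look_map: "x \<in> set xs \<Longrightarrow> look xs (map h xs) x = h x"
  by (simp add: look_def map_of_zip_map)

lemma listeq: "distinct xs \<Longrightarrow> length ys = length xs \<Longrightarrow> (map h xs = ys) \<longleftrightarrow> (\<forall>x\<in>set xs. h x = look xs ys x)"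
proof (induction xs arbitrary: ys)
  case Nil then show ?case by simp
next
  case (Cons x xs)
  then obtain y ys' where ys: "ys = y # ys'" by (cases ys) auto
  have l: "\<And>z. z \<in> set xs \<Longrightarrow> look (x#xs) (y#ys') z = look xs ys' z"
    using Cons.prems by (auto simp: look_def)
  have "look (x#xs) (y#ys') x = y" by (simp add: look_def)
  then show ?case using Cons l ys by auto
qed

lemma part_sub: "part_set X c k' a \<subseteq> dom X"
  by (auto simp: part_set_def)

lemma DPFM_cong: "(\<And>x. x \<in> P \<Longrightarrow> H z x = H' z' x) \<Longrightarrow> DPFM H P e \<gamma> z al = DPFM H' P e \<gamma> z' al"
  unfolding DPFM_def by (simp cong: image_cong)

lemma row_eq:
  fixes K :: "'k measure" and H :: "'k \<Rightarrow> 'id \<Rightarrow> nat" and X :: "'id \<rightharpoonup> 'a::euclidean_space"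
  assumes hash: "ideal_geo_hash K H \<gamma>" and finD: "finite D" and domD: "dom X \<subseteq> D"
  shows "DPFMPS_row K H \<gamma> e c k' X =
    measure_pmf (map_pmf (\<lambda>(h,A). Psi h X c k' e \<gamma> A)
       (pair_pmf (Pi_pmf D 0 (\<lambda>_. geom_pos \<gamma>)) (Pi_pmf {..<k'} 0 (\<lambda>_. alpha_p_pmf e \<gamma>))))"
proof -
  interpret K: prob_space K using hash by (simp add: ideal_geo_hash_def)
  have Hsets: "\<And>x n. {\<zeta> \<in> space K. H \<zeta> x = n} \<in> sets K" using hash by (simp add: ideal_geo_hash_def)
  have Hmeas: "\<And>S f. finite S \<Longrightarrow> measure K {\<zeta> \<in> space K. \<forall>x\<in>S. H \<zeta> x = f x} = (\<Prod>x\<in>S. pmf (geom_pos \<gamma>) (f x))"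
    using hash by (simp add: ideal_geo_hash_def)
  have Ssets: "\<And>S f. finite S \<Longrightarrow> {\<zeta> \<in> space K. \<forall>x\<in>S. H \<zeta> x = f x} \<in> sets K"
    by (rule sets.sets_Collect_finite_All) (auto simp: Hsets)
  obtain xs where xs: "distinct xs" "set xs = D" using finite_distinct_list[OF finD] by blast
  define P where "P = Pi_pmf {..<k'} 0 (\<lambda>_. alpha_p_pmf e \<gamma>)"
  define PiD where "PiD = Pi_pmf D 0 (\<lambda>_. geom_pos \<gamma>)"
  define hv where "hv = (\<lambda>\<zeta>. map (H \<zeta>) xs)"
  define Q where "Q = map_pmf (\<lambda>h. map h xs) PiD"
  define \<Phi> where "\<Phi> = (\<lambda>ys A. Psi (look xs ys) X c k' e \<gamma> A)"
  define f where "f = (\<lambda>(\<zeta>, A). map (\<lambda>a. DPFM H (part_set X c k' a) e \<gamma> \<zeta> (A a)) [0..<k'])"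
  have sub: "\<And>a. part_set X c k' a \<subseteq> set xs" using xs(2) domD by (intro order_trans[OF part_sub]) simp
  have key1: "\<And>\<zeta> A. f (\<zeta>, A) = \<Phi> (hv \<zeta>) A"
    unfolding f_def \<Phi>_def Psi_def hv_def
    by (auto intro!: DPFM_cong simp: look_map dest!: subsetD[OF sub])
  have key2: "\<And>h A. \<Phi> (map h xs) A = Psi h X c k' e \<gamma> A"
    unfolding \<Phi>_def Psi_def
    by (auto intro!: DPFM_cong simp: look_map dest!: subsetD[OF sub])
  have pre: "hv -` {ys} \<inter> space K = (if length ys = length xs then {\<zeta> \<in> space K. \<forall>x\<in>D. H \<zeta> x = look xs ys x} else {})" for ys
    using listeq[OF xs(1)] xs(2) by (auto simp: hv_def)
  have hv_meas: "hv \<in> measurable K (count_space UNIV)"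
    unfolding measurable_count_space_eq2_countable using pre Ssets finD by auto
  have distrQ: "distr K (count_space UNIV) hv = measure_pmf Q"
  proof (rule measure_eqI_countable[where A=UNIV])
    fix ys :: "nat list"
    have "emeasure (distr K (count_space UNIV) hv) {ys} = emeasure K (hv -` {ys} \<inter> space K)"
      using hv_meas by (simp add: emeasure_distr)
    also have "\<dots> = emeasure Q {ys}"
    proof (cases "length ys = length xs")
      case False
      then have "(\<lambda>h. map h xs) -` {ys} = {}" by auto
      then show ?thesis using False pre by (simp add: Q_def)
    next
      case True
      have e1: "(\<lambda>h. map h xs) -` {ys} = Pi D (\<lambda>x. {look xs ys x})"
        using listeq[OF xs(1) True] xs(2) by (auto simp: Pi_def)
      have "emeasure Q {ys} = ennreal (measure_pmf.prob PiD (Pi D (\<lambda>x. {look xs ys x})))"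
        by (simp add: Q_def e1 measure_pmf.emeasure_eq_measure)
      also have "\<dots> = ennreal (\<Prod>x\<in>D. pmf (geom_pos \<gamma>) (look xs ys x))"
        unfolding PiD_def by (subst measure_Pi_pmf_Pi) (auto simp: finD measure_pmf_single)
      finally show ?thesis using True pre K.emeasure_eq_measure Hmeas[OF finD] by simp
    qed
    finally show "emeasure (distr K (count_space UNIV) hv) {ys} = emeasure Q {ys}" .
  qed (auto simp: countableI_type)
  have f_eq: "\<And>p. f p = \<Phi> (hv (fst p)) (snd p)" using key1 by (auto simp: case_prod_beta)
  have f_meas: "f \<in> measurable (K \<Otimes>\<^sub>M measure_pmf P) (count_space UNIV)"
    unfolding f_eq
  proof (rule measurable_compose_countable[where f="\<lambda>i p. \<Phi> i (snd p)"])
    show "(\<lambda>p. hv (fst p)) \<in> measurable (K \<Otimes>\<^sub>M measure_pmf P) (count_space UNIV)"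
      using hv_meas by measurable
    fix i show "(\<lambda>p. \<Phi> i (snd p)) \<in> measurable (K \<Otimes>\<^sub>M measure_pmf P) (count_space UNIV)"
      by (rule measurable_compose[OF measurable_snd]) simp
  qed
  define G where "G = (\<lambda>ys l. emeasure (measure_pmf P) {A. \<Phi> ys A = l})"
  have rhs: "map_pmf (\<lambda>(h,A). Psi h X c k' e \<gamma> A) (pair_pmf PiD P) = map_pmf (\<lambda>(ys, A). \<Phi> ys A) (pair_pmf Q P)"
    unfolding Q_def pair_map_pmf1 map_pmf_comp by (simp add: key2 case_prod_beta apfst_def map_prod_def) (simp add: case_prod_unfold)
  show ?thesis
    unfolding P_def[symmetric] PiD_def[symmetric] rhs
  proof (rule measure_eqI_countable[where A=UNIV])
    fix l :: "nat list"
    have "emeasure (DPFMPS_row K H \<gamma> e c k' X) {l} = emeasure (K \<Otimes>\<^sub>M measure_pmf P) (f -` {l} \<inter> space (K \<Otimes>\<^sub>M measure_pmf P))"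
      unfolding DPFMPS_row_def P_def[symmetric] f_def[symmetric] using f_meas by (simp add: emeasure_distr)
    also have "\<dots> = (\<integral>\<^sup>+\<zeta>. emeasure (measure_pmf P) (Pair \<zeta> -` (f -` {l} \<inter> space (K \<Otimes>\<^sub>M measure_pmf P))) \<partial>K)"
      using f_meas by (intro measure_pmf.emeasure_pair_measure_alt) (simp add: measurable_sets)
    also have "\<dots> = (\<integral>\<^sup>+\<zeta>. G (hv \<zeta>) l \<partial>K)"
      unfolding G_def by (intro nn_integral_cong arg_cong[where f="emeasure (measure_pmf P)"]) (auto simp: space_pair_measure key1)
    also have "\<dots> = (\<integral>\<^sup>+ys. G ys l \<partial>distr K (count_space UNIV) hv)"
      using hv_meas by (subst nn_integral_distr) auto
    also have "\<dots> = (\<integral>\<^sup>+ys. G ys l \<partial>Q)" by (simp add: distrQ)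
    also have "\<dots> = emeasure (map_pmf (\<lambda>(ys, A). \<Phi> ys A) (pair_pmf Q P)) {l}"
    proof -
      have Gi: "\<And>ys. G ys l = (\<integral>\<^sup>+A. indicator {A. \<Phi> ys A = l} A \<partial>P)"
        unfolding G_def by (subst nn_integral_indicator) auto
      have "emeasure (map_pmf (\<lambda>(ys, A). \<Phi> ys A) (pair_pmf Q P)) {l} =
         (\<integral>\<^sup>+x. indicator ((\<lambda>(ys, A). \<Phi> ys A) -` {l}) x \<partial>pair_pmf Q P)"
        by (subst nn_integral_indicator) auto
      also have "\<dots> = (\<integral>\<^sup>+ys. \<integral>\<^sup>+A. indicator ((\<lambda>(ys, A). \<Phi> ys A) -` {l}) (ys, A) \<partial>P \<partial>Q)"
        by (rule nn_integral_pair_pmf')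
      also have "\<dots> = (\<integral>\<^sup>+ys. G ys l \<partial>Q)"
        unfolding Gi by (intro nn_integral_cong) (auto simp: indicator_def)
      finally show ?thesis by simp
    qed
    finally show "emeasure (DPFMPS_row K H \<gamma> e c k' X) {l} = emeasure (map_pmf (\<lambda>(ys, A). \<Phi> ys A) (pair_pmf Q P)) {l}" .
  qed (auto simp: DPFMPS_row_def countableI_type)
qed

lemma nearest_lt:
  assumes "k' \<ge> 1"
  shows "nearest c k' x < k'"
proof -
  define d where "d = (\<lambda>a. (norm (x - c a))\<^sup>2)"
  have "0 \<in> {..<k'}" using assms by simp
  then have ne: "d ` {..<k'} \<noteq> {}" by blast
  have "Min (d ` {..<k'}) \<in> d ` {..<k'}" using ne by (intro Min_in) auto
  then obtain a where a: "a < k'" "d a = Min (d ` {..<k'})" by auto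
  have "\<forall>j<k'. d a \<le> d j" using a by auto
  then have "\<exists>a. a < k' \<and> (\<forall>j<k'. (norm (x - c a))\<^sup>2 \<le> (norm (x - c j))\<^sup>2)" using a d_def by auto
  from LeastI_ex[OF this] show ?thesis unfolding nearest_def by blast
qed

lemma part_upd:
  assumes "u \<notin> dom X"
  shows "part_set (X(u \<mapsto> r)) c k' a = (if a = nearest c k' r then insert u (part_set X c k' a) else part_set X c k' a)"
  using assms by (auto simp: part_set_def split: if_splits)

lemma DPFM_split: "DPFM H P e \<gamma> z al = max al (DPFM H P e \<gamma> z 0)"
  unfolding DPFM_def by (simp add: max_def)

lemma Max_ins_upd:
  assumes "finite P" "u \<notin> P"
  shows "Max (insert 0 (h(u := w) ` insert u P)) = max w (Max (insert 0 (h ` P)))"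
proof -
  have "h(u := w) ` insert u P = insert w (h ` P)" using assms by auto
  moreover have "insert 0 (insert w (h ` P)) = insert w (insert 0 (h ` P))" by auto
  moreover have "Max (insert w (insert 0 (h ` P))) = max w (Max (insert 0 (h ` P)))"
    using assms by (intro Max_insert) auto
  ultimately show ?thesis by simp
qed

lemma claimX:
  assumes "u \<notin> dom X" "a0 < k'"
  shows "Psi (h(u:=w)) X c k' e \<gamma> (f(a0:=al)) = upd a0 (Psi h X c k' e \<gamma> (f(a0:=0))) al"
proof (rule nth_equalityI)
  show "length (Psi (h(u:=w)) X c k' e \<gamma> (f(a0:=al))) = length (upd a0 (Psi h X c k' e \<gamma> (f(a0:=0))) al)"
    by (simp add: Psi_def upd_def)
  fix i assume "i < length (Psi (h(u:=w)) X c k' e \<gamma> (f(a0:=al)))"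
  then have i: "i < k'" by (simp add: Psi_def)
  have cong: "DPFM (\<lambda>_. h(u:=w)) (part_set X c k' i) e \<gamma> () b = DPFM (\<lambda>_. h) (part_set X c k' i) e \<gamma> () b" for b
    using assms(1) part_sub[of X c k' i] by (intro DPFM_cong) auto
  show "Psi (h(u:=w)) X c k' e \<gamma> (f(a0:=al)) ! i = upd a0 (Psi h X c k' e \<gamma> (f(a0:=0))) al ! i"
    using i assms(2) cong by (auto simp: Psi_def upd_def nth_list_update DPFM_split[of _ _ _ _ _ al])
qed

lemma claimX':
  assumes "u \<notin> dom X" "finite (dom X)" "a0 = nearest c k' r" "a0 < k'"
  shows "Psi (h(u:=w)) (X(u \<mapsto> r)) c k' e \<gamma> (f(a0:=al)) = upd a0 (Psi h X c k' e \<gamma> (f(a0:=0))) (max al w)"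
proof (rule nth_equalityI)
  show "length (Psi (h(u:=w)) (X(u \<mapsto> r)) c k' e \<gamma> (f(a0:=al))) = length (upd a0 (Psi h X c k' e \<gamma> (f(a0:=0))) (max al w))"
    by (simp add: Psi_def upd_def)
  fix i assume "i < length (Psi (h(u:=w)) (X(u \<mapsto> r)) c k' e \<gamma> (f(a0:=al)))"
  then have i: "i < k'" by (simp add: Psi_def)
  have cong: "DPFM (\<lambda>_. h(u:=w)) (part_set X c k' i) e \<gamma> () b = DPFM (\<lambda>_. h) (part_set X c k' i) e \<gamma> () b" for b
    using assms(1) part_sub[of X c k' i] by (intro DPFM_cong) auto
  have fin: "finite (part_set X c k' i)" using assms(2) part_sub[of X c k' i] finite_subset by blast
  have un: "u \<notin> part_set X c k' i" using assms(1) part_sub[of X c k' i] by blast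
  have ins: "DPFM (\<lambda>_. h(u:=w)) (insert u (part_set X c k' i)) e \<gamma> () al = max (max al w) (DPFM (\<lambda>_. h) (part_set X c k' i) e \<gamma> () 0)"
    unfolding DPFM_def using Max_ins_upd[OF fin un, of h w] by (simp add: max_def)
  show "Psi (h(u:=w)) (X(u \<mapsto> r)) c k' e \<gamma> (f(a0:=al)) ! i = upd a0 (Psi h X c k' e \<gamma> (f(a0:=0))) (max al w) ! i"
  proof (cases "i = a0")
    case True
    then show ?thesis using i ins assms by (simp add: Psi_def upd_def part_upd)
  next
    case False
    then show ?thesis using i cong assms by (simp add: Psi_def upd_def part_upd nth_list_update)
  qed
qed

lemma decomp:
  assumes "finite (dom X)" "u \<notin> dom X" "a0 = nearest c k' r" "a0 < k'"
  shows "map_pmf (\<lambda>(h,A). Psi h X c k' e \<gamma> A) (pair_pmf (Pi_pmf (insert u (dom X)) 0 (\<lambda>_. geom_pos \<gamma>)) (Pi_pmf {..<k'} 0 (\<lambda>_. alpha_p_pmf e \<gamma>)))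
     = bind_pmf (pair_pmf (Pi_pmf (dom X) 0 (\<lambda>_. geom_pos \<gamma>)) (Pi_pmf ({..<k'} - {a0}) 0 (\<lambda>_. alpha_p_pmf e \<gamma>)))
         (\<lambda>z. map_pmf (upd a0 (Psi (fst z) X c k' e \<gamma> ((snd z)(a0:=0)))) (alpha_p_pmf e \<gamma>))"
    (is ?A)
  and "map_pmf (\<lambda>(h,A). Psi h (X(u \<mapsto> r)) c k' e \<gamma> A) (pair_pmf (Pi_pmf (insert u (dom X)) 0 (\<lambda>_. geom_pos \<gamma>)) (Pi_pmf {..<k'} 0 (\<lambda>_. alpha_p_pmf e \<gamma>)))
     = bind_pmf (pair_pmf (Pi_pmf (dom X) 0 (\<lambda>_. geom_pos \<gamma>)) (Pi_pmf ({..<k'} - {a0}) 0 (\<lambda>_. alpha_p_pmf e \<gamma>)))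
         (\<lambda>z. map_pmf (upd a0 (Psi (fst z) X c k' e \<gamma> ((snd z)(a0:=0)))) (ap2 e \<gamma>))"
    (is ?B)
proof -
  have PiD: "Pi_pmf (insert u (dom X)) 0 (\<lambda>_. geom_pos \<gamma>) =
      map_pmf (\<lambda>(y,f). f(u:=y)) (pair_pmf (geom_pos \<gamma>) (Pi_pmf (dom X) 0 (\<lambda>_. geom_pos \<gamma>)))"
    using assms by (intro Pi_pmf_insert) auto
  have ins: "{..<k'} = insert a0 ({..<k'} - {a0})" using assms by auto
  have PiK: "Pi_pmf {..<k'} 0 (\<lambda>_. alpha_p_pmf e \<gamma>) =
      map_pmf (\<lambda>(y,f). f(a0:=y)) (pair_pmf (alpha_p_pmf e \<gamma>) (Pi_pmf ({..<k'} - {a0}) 0 (\<lambda>_. alpha_p_pmf e \<gamma>)))"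
    by (subst ins, intro Pi_pmf_insert) auto
  note cX = claimX[OF assms(2) assms(4)]
  note cX' = claimX'[OF assms(2) assms(1) assms(3) assms(4)]
  show ?A
    unfolding PiD PiK
    by (simp add: map_pmf_def pair_pmf_def bind_assoc_pmf bind_return_pmf cX bind_commute_pmf[of "alpha_p_pmf e \<gamma>"])
  show ?B
    unfolding PiD PiK ap2_def
    apply (simp add: map_pmf_def pair_pmf_def bind_assoc_pmf bind_return_pmf cX' bind_commute_pmf[of "geom_pos \<gamma>"])
    apply (simp add: bind_commute_pmf[of "alpha_p_pmf e \<gamma>"])
    done
qed

lemma Psi_amin: "a0 < k' \<Longrightarrow> Psi h X c k' e \<gamma> A ! a0 \<ge> alpha_min \<gamma> e"
  by (simp add: Psi_def DPFM_def)

lemma emeasure_to_measure: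
  assumes "emeasure (measure_pmf p) S \<le> ennreal c * emeasure (measure_pmf q) S" "c \<ge> 0"
  shows "measure (measure_pmf p) S \<le> c * measure (measure_pmf q) S"
proof -
  have "ennreal (measure (measure_pmf p) S) \<le> ennreal (c * measure (measure_pmf q) S)"
    using assms by (simp add: measure_pmf.emeasure_eq_measure ennreal_mult)
  then show ?thesis using assms(2) by (simp add: ennreal_le_iff)
qed

lemma main_neigh:
  fixes K :: "'k measure" and H :: "'k \<Rightarrow> 'id \<Rightarrow> nat" and X :: "'id \<rightharpoonup> 'a::euclidean_space"
  assumes hash: "ideal_geo_hash K H \<gamma>" and g: "\<gamma> > 0" and e: "e > 0" and k: "k' \<ge> 1"
    and fin: "finite (dom X)" and u: "u \<notin> dom X"
  shows "measure (DPFMPS_row K H \<gamma> e c k' (X(u \<mapsto> r))) S \<le> exp e * measure (DPFMPS_row K H \<gamma> e c k' X) S"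
    and "measure (DPFMPS_row K H \<gamma> e c k' X) S \<le> exp e * measure (DPFMPS_row K H \<gamma> e c k' (X(u \<mapsto> r))) S"
proof -
  define a0 where "a0 = nearest c k' r"
  have a0: "a0 < k'" unfolding a0_def using nearest_lt[OF k] .
  define Z where "Z = pair_pmf (Pi_pmf (dom X) 0 (\<lambda>_. geom_pos \<gamma>)) (Pi_pmf ({..<k'} - {a0}) 0 (\<lambda>_. alpha_p_pmf e \<gamma>))"
  define Lz where "Lz = (\<lambda>z. Psi (fst z) X c k' e \<gamma> ((snd z)(a0:=0)))"
  have rX: "DPFMPS_row K H \<gamma> e c k' X = measure_pmf (bind_pmf Z (\<lambda>z. map_pmf (upd a0 (Lz z)) (alpha_p_pmf e \<gamma>)))"
  proof -
    have "DPFMPS_row K H \<gamma> e c k' X = measure_pmf (map_pmf (\<lambda>(h,A). Psi h X c k' e \<gamma> A) (pair_pmf (Pi_pmf (insert u (dom X)) 0 (\<lambda>_. geom_pos \<gamma>)) (Pi_pmf {..<k'} 0 (\<lambda>_. alpha_p_pmf e \<gamma>))))"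
      by (rule row_eq[OF hash]) (use fin in auto)
    also have "\<dots> = measure_pmf (bind_pmf Z (\<lambda>z. map_pmf (upd a0 (Lz z)) (alpha_p_pmf e \<gamma>)))"
      unfolding Z_def Lz_def by (simp only: decomp(1)[OF fin u a0_def a0])
    finally show ?thesis .
  qed
  have rX': "DPFMPS_row K H \<gamma> e c k' (X(u \<mapsto> r)) = measure_pmf (bind_pmf Z (\<lambda>z. map_pmf (upd a0 (Lz z)) (ap2 e \<gamma>)))"
  proof -
    have "DPFMPS_row K H \<gamma> e c k' (X(u \<mapsto> r)) = measure_pmf (map_pmf (\<lambda>(h,A). Psi h (X(u \<mapsto> r)) c k' e \<gamma> A) (pair_pmf (Pi_pmf (insert u (dom X)) 0 (\<lambda>_. geom_pos \<gamma>)) (Pi_pmf {..<k'} 0 (\<lambda>_. alpha_p_pmf e \<gamma>))))"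
      by (rule row_eq[OF hash]) (use fin in auto)
    also have "\<dots> = measure_pmf (bind_pmf Z (\<lambda>z. map_pmf (upd a0 (Lz z)) (ap2 e \<gamma>)))"
      unfolding Z_def Lz_def by (simp only: decomp(2)[OF fin u a0_def a0])
    finally show ?thesis .
  qed
  have am: "\<And>z. Lz z ! a0 \<ge> alpha_min \<gamma> e" unfolding Lz_def using a0 by (rule Psi_amin)
  have ee: "exp e \<ge> 0" by simp
  show "measure (DPFMPS_row K H \<gamma> e c k' (X(u \<mapsto> r))) S \<le> exp e * measure (DPFMPS_row K H \<gamma> e c k' X) S"
    unfolding rX rX' using ee
    by (intro emeasure_to_measure mixture kern_list(1)[OF g e am])
  show "measure (DPFMPS_row K H \<gamma> e c k' X) S \<le> exp e * measure (DPFMPS_row K H \<gamma> e c k' (X(u \<mapsto> r))) S"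
    unfolding rX rX' using ee
    by (intro emeasure_to_measure mixture kern_list(2)[OF g e am])
qed

theorem lemma4p3:
  fixes Ks :: "nat \<Rightarrow> 'k measure" and H :: "'k \<Rightarrow> 'id \<Rightarrow> nat"
    and c :: "nat \<Rightarrow> 'a::euclidean_space" and k' M i :: nat
    and \<gamma> \<epsilon>2 \<delta>2 :: real
  assumes "\<gamma> > 0" and "\<epsilon>2 > 0" and "0 < \<delta>2" and "\<delta>2 < 1" and "M \<ge> 1" and "k' \<ge> 1"
    and "\<forall>j\<in>{1..M}. ideal_geo_hash (Ks j) H \<gamma>"
    and "i \<in> {1..M}"
  shows "eps_DP (\<lambda>X :: 'id \<rightharpoonup> 'a. DPFMPS_row (Ks i) H \<gamma> (eps_prime \<epsilon>2 \<delta>2 M) c k' X)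
                (eps_prime \<epsilon>2 \<delta>2 M)"
proof -
  define e where "e = eps_prime \<epsilon>2 \<delta>2 M"
  have hash: "ideal_geo_hash (Ks i) H \<gamma>" using assms by auto
  have "ln (1 / \<delta>2) > 0" using assms by simp
  moreover have "real M > 0" using assms by simp
  ultimately have "sqrt (real M * ln (1 / \<delta>2)) > 0" by simp
  then have e: "e > 0" unfolding e_def eps_prime_def using assms by simp
  show ?thesis
    unfolding e_def[symmetric] eps_DP_def
  proof (intro allI impI)
    fix X X' :: "'id \<rightharpoonup> 'a" and S
    assume a: "finite (dom X) \<and> finite (dom X') \<and> neighbours X X'"
    then obtain u r where "(u \<notin> dom X \<and> X' = X(u \<mapsto> r)) \<or> (u \<notin> dom X' \<and> X = X'(u \<mapsto> r))"
      unfolding neighbours_def by blast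
    then show "measure (DPFMPS_row (Ks i) H \<gamma> e c k' X) S \<le> exp e * measure (DPFMPS_row (Ks i) H \<gamma> e c k' X') S"
    proof
      assume h: "u \<notin> dom X \<and> X' = X(u \<mapsto> r)"
      then have "X' = X(u \<mapsto> r)" "u \<notin> dom X" by auto
      then show ?thesis using main_neigh(2)[OF hash assms(1) e assms(6), where X=X and u=u and r=r and S=S and c=c] a by simp
    next
      assume h: "u \<notin> dom X' \<and> X = X'(u \<mapsto> r)"
      then have "X = X'(u \<mapsto> r)" "u \<notin> dom X'" by auto
      then show ?thesis using main_neigh(1)[OF hash assms(1) e assms(6), where X=X' and u=u and r=r and S=S and c=c] a by simp
    qed
  qed
qed

end
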